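(* Let $\Lambda=KQ/\langle I\rangle$ be a $1$-Gorenstein gentle algebra over an algebraically closed field $K$, let $\Gamma=KQ^{Aus}/\langle I^{Aus}\rangle$ be its Cohen–Macaulay Auslander algebra and $\Phi$ the functor described in the context. Let $N=((N_i)_{i\in Q_0},(N_\alpha)_{\alpha\in Q_1})$ be a Gorenstein projective $\Lambda$-module, so that $\widehat{N}=\Phi(N)$ has underlying space $\bigoplus_{i\in Q_0}\widehat{N}_i\oplus\bigoplus_{\alpha\in Q_1^{cyc}}\widehat{N}_\alpha$. Then: (i) for every $i\in Q_0$, $\dim\widehat{N}_i=\dim N_i=\dim\mathrm{Hom}_\Lambda(P_i,N)$, where $P_i=\Lambda e_i$ is the indecomposable projective $\Lambda$-module at $i$; (ii) for every $\alpha\in Q_1^{cyc}$, $\dim\widehat{N}_\alpha=\dim\mathrm{Hom}_\Lambda(P_{s(\alpha)},N)-\dim\mathrm{Hom}_\Lambda(R(\beta),N)$, where $\beta$ is the arrow satisfying $\alpha\beta\in I$ and $R(\beta)=\Lambda\beta$.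
   Context: Conventions: arrows $\alpha:s(\alpha)\to t(\alpha)$; paths composed right to left ($\alpha\beta$ means $\beta$ then $\alpha$, so $t(\beta)=s(\alpha)$). A gentle algebra is a finite dimensional $\Lambda=KQ/\langle I\rangle$ where $I$ is a set of length-$2$ paths such that: each vertex is the start of at most two and the end of at most two arrows; for each arrow $\alpha$ there is at most one arrow $\beta$ with $t(\beta)=s(\alpha)$, $\alpha\beta\notin I$, at most one $\gamma$ with $s(\gamma)=t(\alpha)$, $\gamma\alpha\notin I$, at most one $\beta$ with $t(\beta)=s(\alpha)$, $\alpha\beta\in I$, and at most one $\gamma$ with $s(\gamma)=t(\alpha)$, $\gamma\alpha\in I$. $\Lambda$ is $1$-Gorenstein if its injective dimension as a left and as a right module is at most $1$. Modules are finite dimensional left modules (representations of $(Q,I)$). A $\Lambda$-module $G$ is Gorenstein projective if there is an exact complex $\cdots\to P^{-1}\to P^0\xrightarrow{d^0}P^1\to\cdots$ of projective $\Lambda$-modules which remains exact under $\mathrm{Hom}_\Lambda(-,\Lambda)$ and with $G\cong\mathrm{Ker}\,d^0$. $\mathcal{C}(\Lambda)$ is the set of repetition-free cyclic paths $\alpha_1\cdots\alpha_n$ (up to cyclic permutation) with $\alpha_i\alpha_{i+1}\in I$ for all $i$ (indices mod $n$); $Q_1^{cyc}$ is the set of arrows on such cycles, $Q_1^{ncyc}=Q_1\setminus Q_1^{cyc}$. For each arrow $\gamma$, $R(\gamma)$ denotes the left ideal $\Lambda\gamma$. $Q^{Aus}$ has vertices $Q_0\sqcup Q_1^{cyc}$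 and arrows $Q_1^{ncyc}\sqcup\{\alpha^+:s(\alpha)\to\alpha\}_{\alpha\in Q_1^{cyc}}\sqcup\{\alpha^-:\alpha\to t(\alpha)\}_{\alpha\in Q_1^{cyc}}$; $I^{Aus}=\{\beta^+\alpha^-\mid\beta\alpha\in I,\ \alpha,\beta\in Q_1^{cyc}\}\cup\{\beta\alpha\mid\beta\alpha\in I,\ \alpha,\beta\in Q_1^{ncyc}\}$; $\Gamma=KQ^{Aus}/\langle I^{Aus}\rangle$. $\Phi(M)=\widehat{M}$ has $\widehat{M}_i=M_i$ ($i\in Q_0$), $\widehat{M}_\alpha=\mathrm{Im}\,M_\alpha$ ($\alpha\in Q_1^{cyc}$), $\widehat{M}_\beta=M_\beta$ ($\beta\in Q_1^{ncyc}$), and $\widehat{M}_{\alpha^+}$, $\widehat{M}_{\alpha^-}$ the surjection $M_{s(\alpha)}\to\mathrm{Im}\,M_\alpha$ and inclusion $\mathrm{Im}\,M_\alpha\to M_{t(\alpha)}$ factoring $M_\alpha$. *)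

theory Defs
  imports Main "HOL-Library.Function_Algebras" "HOL-Computational_Algebra.Polynomial"
begin

definition vscale :: "'k::field \<Rightarrow> ('u \<Rightarrow> 'k) \<Rightarrow> ('u \<Rightarrow> 'k)" where
  "vscale c v = (\<lambda>u. c * v u)"

definition vdim :: "('u \<Rightarrow> 'k::field) set \<Rightarrow> nat" where
  "vdim S = vector_space.dim (vscale :: 'k \<Rightarrow> _) S"

definition vsubspace :: "('u \<Rightarrow> 'k::field) set \<Rightarrow> bool" where
  "vsubspace S = module.subspace (vscale :: 'k \<Rightarrow> _) S"

definition fin_dim :: "('u \<Rightarrow> 'k::field) set \<Rightarrow> bool" where
  "fin_dim S = (\<exists>B. finite B \<and> B \<subseteq> S \<and> S \<subseteq> module.span (vscale :: 'k \<Rightarrow> _) B)"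

definition lin_on :: "('u \<Rightarrow> 'k::field) set \<Rightarrow> (('u \<Rightarrow> 'k) \<Rightarrow> ('w \<Rightarrow> 'k)) \<Rightarrow> bool" where
  "lin_on V f = ((\<forall>x\<in>V. \<forall>y\<in>V. f (x + y) = f x + f y) \<and> (\<forall>c x. x \<in> V \<longrightarrow> f (vscale c x) = vscale c (f x)))"

record ('v, 'a) quiver =
  verts :: "'v set"
  arrs :: "'a set"
  src :: "'a \<Rightarrow> 'v"
  tgt :: "'a \<Rightarrow> 'v"

text \<open>A relation is a pair (al, be) standing for the length-2 path al be
  (first be, then al; so tgt be = src al).\<close>

definition quiver_opp :: "('v, 'a) quiver \<Rightarrow> ('v, 'a) quiver" where
  "quiver_opp Q = \<lparr>verts = verts Q, arrs = arrs Q, src = tgt Q, tgt = src Q\<rparr>"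

definition rel_opp :: "('a \<times> 'a) set \<Rightarrow> ('a \<times> 'a) set" where
  "rel_opp I = {(b, a). (a, b) \<in> I}"

text \<open>A path is a pair (i, ps): start vertex i and arrow list ps = [a1,...,an]
  denoting the composite a1 a2 ... an (an is traversed first, a1 last).\<close>

definition is_path :: "('v, 'a) quiver \<Rightarrow> 'v \<times> 'a list \<Rightarrow> bool" where
  "is_path Q p = (fst p \<in> verts Q \<and> set (snd p) \<subseteq> arrs Q \<and>
     (snd p \<noteq> [] \<longrightarrow> src Q (last (snd p)) = fst p) \<and>
     (\<forall>k. Suc k < length (snd p) \<longrightarrow> src Q (snd p ! k) = tgt Q (snd p ! Suc k)))"

definition path_end :: "('v, 'a) quiver \<Rightarrow> 'v \<times> 'a list \<Rightarrow> 'v" where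
  "path_end Q p = (case snd p of [] \<Rightarrow> fst p | a # _ \<Rightarrow> tgt Q a)"

text \<open>Paths not containing a relation as a subpath: these form a basis of KQ/<I>.\<close>
definition nz_path :: "('v, 'a) quiver \<Rightarrow> ('a \<times> 'a) set \<Rightarrow> 'v \<times> 'a list \<Rightarrow> bool" where
  "nz_path Q I p = (is_path Q p \<and>
     (\<forall>k. Suc k < length (snd p) \<longrightarrow> (snd p ! k, snd p ! Suc k) \<notin> I))"

definition gentle :: "('v, 'a) quiver \<Rightarrow> ('a \<times> 'a) set \<Rightarrow> bool" where
  "gentle Q I = (finite (verts Q) \<and> finite (arrs Q) \<and>
     (\<forall>a\<in>arrs Q. src Q a \<in> verts Q \<and> tgt Q a \<in> verts Q) \<and>
     I \<subseteq> {(a, b). a \<in> arrs Q \<and> b \<in> arrs Q \<and> tgt Q b = src Q a} \<and>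
     (\<forall>i\<in>verts Q. card {a\<in>arrs Q. src Q a = i} \<le> 2 \<and> card {a\<in>arrs Q. tgt Q a = i} \<le> 2) \<and>
     (\<forall>a\<in>arrs Q.
        card {b\<in>arrs Q. tgt Q b = src Q a \<and> (a, b) \<notin> I} \<le> 1 \<and>
        card {c\<in>arrs Q. src Q c = tgt Q a \<and> (c, a) \<notin> I} \<le> 1 \<and>
        card {b\<in>arrs Q. tgt Q b = src Q a \<and> (a, b) \<in> I} \<le> 1 \<and>
        card {c\<in>arrs Q. src Q c = tgt Q a \<and> (c, a) \<in> I} \<le> 1) \<and>
     finite {p. nz_path Q I p})"

definition cyc_arrows :: "('v, 'a) quiver \<Rightarrow> ('a \<times> 'a) set \<Rightarrow> 'a set" where
  "cyc_arrows Q I = {a \<in> arrs Q. \<exists>cs. cs \<noteq> [] \<and> distinct cs \<and> set cs \<subseteq> arrs Q \<and> a \<in> set cs \<and>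
       (\<forall>k<length cs. (cs ! k, cs ! ((Suc k) mod length cs)) \<in> I)}"

record ('v, 'a, 'u, 'k) rep =
  space :: "'v \<Rightarrow> ('u \<Rightarrow> 'k) set"
  rmap :: "'a \<Rightarrow> ('u \<Rightarrow> 'k) \<Rightarrow> ('u \<Rightarrow> 'k)"

definition is_module :: "('v, 'a) quiver \<Rightarrow> ('a \<times> 'a) set \<Rightarrow> ('v, 'a, 'u, 'k::field) rep \<Rightarrow> bool" where
  "is_module Q I M = ((\<forall>i\<in>verts Q. vsubspace (space M i) \<and> fin_dim (space M i)) \<and>
     (\<forall>a\<in>arrs Q. lin_on (space M (src Q a)) (rmap M a) \<and>
        (\<forall>x\<in>space M (src Q a). rmap M a x \<in> space M (tgt Q a))) \<and>
     (\<forall>(a, b)\<in>I. \<forall>x\<in>space M (src Q b). rmap M a (rmap M b x) = 0))"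

text \<open>Module homomorphisms (morphisms of representations), made extensional so that
  the Hom-set is a genuine vector space of functions.\<close>
definition Hom :: "('v, 'a) quiver \<Rightarrow> ('v, 'a, 'u, 'k::field) rep \<Rightarrow> ('v, 'a, 'w, 'k) rep \<Rightarrow>
    ('v \<Rightarrow> ('u \<Rightarrow> 'k) \<Rightarrow> ('w \<Rightarrow> 'k)) set" where
  "Hom Q M N = {f. (\<forall>i. i \<notin> verts Q \<longrightarrow> f i = (\<lambda>x. 0)) \<and>
     (\<forall>i\<in>verts Q. lin_on (space M i) (f i) \<and> (\<forall>x\<in>space M i. f i x \<in> space N i) \<and>
        (\<forall>x. x \<notin> space M i \<longrightarrow> f i x = 0)) \<and>
     (\<forall>a\<in>arrs Q. \<forall>x\<in>space M (src Q a). f (tgt Q a) (rmap M a x) = rmap N a (f (src Q a) x))}"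

definition hscale :: "'k::field \<Rightarrow> ('v \<Rightarrow> ('u \<Rightarrow> 'k) \<Rightarrow> ('w \<Rightarrow> 'k)) \<Rightarrow> ('v \<Rightarrow> ('u \<Rightarrow> 'k) \<Rightarrow> ('w \<Rightarrow> 'k))" where
  "hscale c f = (\<lambda>i x. vscale c (f i x))"

definition hdim :: "('v \<Rightarrow> ('u \<Rightarrow> 'k::field) \<Rightarrow> ('w \<Rightarrow> 'k)) set \<Rightarrow> nat" where
  "hdim H = vector_space.dim (hscale :: 'k \<Rightarrow> _) H"

definition hcomp :: "('v \<Rightarrow> ('w \<Rightarrow> 'k) \<Rightarrow> ('x \<Rightarrow> 'k)) \<Rightarrow> ('v \<Rightarrow> ('u \<Rightarrow> 'k) \<Rightarrow> ('w \<Rightarrow> 'k)) \<Rightarrow>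
    ('v \<Rightarrow> ('u \<Rightarrow> 'k) \<Rightarrow> ('x \<Rightarrow> 'k))" where
  "hcomp g f = (\<lambda>i x. g i (f i x))"

definition isomorphic :: "('v, 'a) quiver \<Rightarrow> ('v, 'a, 'u, 'k::field) rep \<Rightarrow> ('v, 'a, 'w, 'k) rep \<Rightarrow> bool" where
  "isomorphic Q M N = (\<exists>f\<in>Hom Q M N. \<exists>g\<in>Hom Q N M.
     (\<forall>i\<in>verts Q. (\<forall>x\<in>space M i. g i (f i x) = x) \<and> (\<forall>y\<in>space N i. f i (g i y) = y)))"

definition mor_surj :: "('v, 'a) quiver \<Rightarrow> ('v, 'a, 'u, 'k::field) rep \<Rightarrow> ('v, 'a, 'w, 'k) rep \<Rightarrow>
    ('v \<Rightarrow> ('u \<Rightarrow> 'k) \<Rightarrow> ('w \<Rightarrow> 'k)) \<Rightarrow> bool" where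
  "mor_surj Q M N f = (\<forall>i\<in>verts Q. f i ` space M i = space N i)"

definition mor_inj :: "('v, 'a) quiver \<Rightarrow> ('v, 'a, 'u, 'k::field) rep \<Rightarrow>
    ('v \<Rightarrow> ('u \<Rightarrow> 'k) \<Rightarrow> ('w \<Rightarrow> 'k)) \<Rightarrow> bool" where
  "mor_inj Q M f = (\<forall>i\<in>verts Q. inj_on (f i) (space M i))"

text \<open>Projective and injective modules, via the lifting / extension properties,
  tested against all (finite dimensional) modules realised in the same ambient
  type (which is infinite dimensional, so every f.d. module is realised up to iso).\<close>
definition projective :: "('v, 'a) quiver \<Rightarrow> ('a \<times> 'a) set \<Rightarrow> ('v, 'a, 'u, 'k::field) rep \<Rightarrow> bool" where
  "projective Q I P = (is_module Q I P \<and>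
     (\<forall>(M :: ('v, 'a, 'u, 'k) rep) (N :: ('v, 'a, 'u, 'k) rep) g f. is_module Q I M \<and> is_module Q I N \<and> g \<in> Hom Q M N \<and> mor_surj Q M N g \<and>
        f \<in> Hom Q P N \<longrightarrow> (\<exists>h\<in>Hom Q P M. hcomp g h = f)))"

definition injective :: "('v, 'a) quiver \<Rightarrow> ('a \<times> 'a) set \<Rightarrow> ('v, 'a, 'u, 'k::field) rep \<Rightarrow> bool" where
  "injective Q I J = (is_module Q I J \<and>
     (\<forall>(M :: ('v, 'a, 'u, 'k) rep) (N :: ('v, 'a, 'u, 'k) rep) g f. is_module Q I M \<and> is_module Q I N \<and> g \<in> Hom Q M N \<and> mor_inj Q M g \<and>
        f \<in> Hom Q M J \<longrightarrow> (\<exists>h\<in>Hom Q N J. hcomp h g = f)))"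

text \<open>Given a set S of nonzero paths closed under left multiplication by arrows
  (a left ideal, spanned by paths), the corresponding left module: at vertex j the
  functions supported on paths of S ending at j; an arrow a acts by p |-> a p.\<close>
definition path_module :: "('v, 'a) quiver \<Rightarrow> ('v \<times> 'a list) set \<Rightarrow>
    ('v, 'a, 'v \<times> 'a list, 'k::field) rep" where
  "path_module Q S = \<lparr>space = (\<lambda>j. {v. \<forall>q. v q \<noteq> 0 \<longrightarrow> q \<in> S \<and> path_end Q q = j}),
     rmap = (\<lambda>a v q. case snd q of [] \<Rightarrow> 0
        | b # q' \<Rightarrow> (if b = a \<and> q \<in> S \<and> (fst q, q') \<in> S then v (fst q, q') else 0))\<rparr>"

definition reg_module :: "('v, 'a) quiver \<Rightarrow> ('a \<times> 'a) set \<Rightarrow> ('v, 'a, 'v \<times> 'a list, 'k::field) rep" where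
  "reg_module Q I = path_module Q {p. nz_path Q I p}"

definition proj_module :: "('v, 'a) quiver \<Rightarrow> ('a \<times> 'a) set \<Rightarrow> 'v \<Rightarrow> ('v, 'a, 'v \<times> 'a list, 'k::field) rep" where
  "proj_module Q I i = path_module Q {p. nz_path Q I p \<and> fst p = i}"

text \<open>R(g) = Lambda g: spanned by the nonzero paths p g (i.e. whose first arrow is g).\<close>
definition R_module :: "('v, 'a) quiver \<Rightarrow> ('a \<times> 'a) set \<Rightarrow> 'a \<Rightarrow> ('v, 'a, 'v \<times> 'a list, 'k::field) rep" where
  "R_module Q I g = path_module Q {p. nz_path Q I p \<and> snd p \<noteq> [] \<and> last (snd p) = g}"

definition injdim_reg_le1 :: "('v, 'a) quiver \<Rightarrow> ('a \<times> 'a) set \<Rightarrow> 'k::field itself \<Rightarrow> bool" where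
  "injdim_reg_le1 Q I (TYPE('k)) = (\<exists>(J0 :: ('v, 'a, 'v \<times> 'a list, 'k) rep) (J1 :: ('v, 'a, 'v \<times> 'a list, 'k) rep) f g.
     injective Q I J0 \<and> injective Q I J1 \<and>
     f \<in> Hom Q (reg_module Q I) J0 \<and> mor_inj Q (reg_module Q I) f \<and>
     g \<in> Hom Q J0 J1 \<and> mor_surj Q J0 J1 g \<and>
     (\<forall>i\<in>verts Q. f i ` space (reg_module Q I) i = {y\<in>space J0 i. g i y = 0}))"

text \<open>Injective dimension of Lambda both as a left module and as a right module
  (= left module over the opposite algebra K Q^op / <I^op>) is at most 1.\<close>
definition one_gorenstein :: "('v, 'a) quiver \<Rightarrow> ('a \<times> 'a) set \<Rightarrow> 'k::field itself \<Rightarrow> bool" where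
  "one_gorenstein Q I K = (injdim_reg_le1 Q I K \<and> injdim_reg_le1 (quiver_opp Q) (rel_opp I) K)"

definition kernel_module :: "('v, 'a, 'u, 'k::field) rep \<Rightarrow> ('v \<Rightarrow> ('u \<Rightarrow> 'k) \<Rightarrow> ('w \<Rightarrow> 'k)) \<Rightarrow>
    ('v, 'a, 'u, 'k) rep" where
  "kernel_module M d = \<lparr>space = (\<lambda>i. {x\<in>space M i. d i x = 0}), rmap = rmap M\<rparr>"

definition gorenstein_projective :: "('v, 'a) quiver \<Rightarrow> ('a \<times> 'a) set \<Rightarrow> ('v, 'a, 'u, 'k::field) rep \<Rightarrow> bool" where
  "gorenstein_projective Q I G = (is_module Q I G \<and>
     (\<exists>(P :: int \<Rightarrow> ('v, 'a, 'v \<times> 'a list, 'k) rep) d.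
        (\<forall>n. projective Q I (P n) \<and> d n \<in> Hom Q (P n) (P (n + 1))) \<and>
        (\<forall>n. \<forall>i\<in>verts Q. d (n - 1) i ` space (P (n - 1)) i = {y\<in>space (P n) i. d n i y = 0}) \<and>
        (\<forall>n. {h\<in>Hom Q (P n) (reg_module Q I). \<forall>i\<in>verts Q. \<forall>x\<in>space (P (n - 1)) i. h i (d (n - 1) i x) = 0}
             = (\<lambda>h. hcomp h (d n)) ` Hom Q (P (n + 1)) (reg_module Q I)) \<and>
        isomorphic Q G (kernel_module (P 0) (d 0))))"

section \<open>The functor Phi (only what is needed: the representation of Q^Aus)\<close>

text \<open>Vertices of Q^Aus: Inl i (i in Q_0) and Inr a (a in Q_1^cyc).
  Arrows of Q^Aus: Inl b (b non-cyclic), Inr (Inl a) = a^+, Inr (Inr a) = a^-.\<close>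
definition aus_quiver :: "('v, 'a) quiver \<Rightarrow> ('a \<times> 'a) set \<Rightarrow> ('v + 'a, 'a + 'a + 'a) quiver" where
  "aus_quiver Q I = \<lparr>verts = Inl ` verts Q \<union> Inr ` cyc_arrows Q I,
     arrs = Inl ` (arrs Q - cyc_arrows Q I) \<union> Inr ` Inl ` cyc_arrows Q I \<union> Inr ` Inr ` cyc_arrows Q I,
     src = (\<lambda>x. case x of Inl b \<Rightarrow> Inl (src Q b) | Inr (Inl a) \<Rightarrow> Inl (src Q a) | Inr (Inr a) \<Rightarrow> Inr a),
     tgt = (\<lambda>x. case x of Inl b \<Rightarrow> Inl (tgt Q b) | Inr (Inl a) \<Rightarrow> Inr a | Inr (Inr a) \<Rightarrow> Inl (tgt Q a))\<rparr>"

definition aus_rel :: "('v, 'a) quiver \<Rightarrow> ('a \<times> 'a) set \<Rightarrow> (('a + 'a + 'a) \<times> ('a + 'a + 'a)) set" where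
  "aus_rel Q I = {(Inr (Inl b), Inr (Inr a)) | b a. (b, a) \<in> I \<and> a \<in> cyc_arrows Q I \<and> b \<in> cyc_arrows Q I}
     \<union> {(Inl b, Inl a) | b a. (b, a) \<in> I \<and> a \<notin> cyc_arrows Q I \<and> b \<notin> cyc_arrows Q I}"

definition Phi :: "('v, 'a) quiver \<Rightarrow> ('a \<times> 'a) set \<Rightarrow> ('v, 'a, 'u, 'k::field) rep \<Rightarrow>
    ('v + 'a, 'a + 'a + 'a, 'u, 'k) rep" where
  "Phi Q I M = \<lparr>space = (\<lambda>x. case x of Inl i \<Rightarrow> space M i
                   | Inr a \<Rightarrow> rmap M a ` space M (src Q a)),
     rmap = (\<lambda>x. case x of Inl b \<Rightarrow> rmap M b | Inr (Inl a) \<Rightarrow> rmap M a | Inr (Inr a) \<Rightarrow> (\<lambda>y. y))\<rparr>"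

end

theory Submission
  imports Defs
begin

lemma vs_vscale: "vector_space (vscale :: 'k::field \<Rightarrow> ('u \<Rightarrow> 'k) \<Rightarrow> _)"
  unfolding vector_space_def module_def vscale_def by (auto simp: fun_eq_iff algebra_simps)

lemma vs_hscale: "vector_space (hscale :: 'k::field \<Rightarrow> ('v \<Rightarrow> ('u \<Rightarrow> 'k) \<Rightarrow> ('w \<Rightarrow> 'k)) \<Rightarrow> _)"
  unfolding vector_space_def module_def hscale_def vscale_def by (auto simp: fun_eq_iff algebra_simps)

context vector_space begin

lemma indep_span_disjoint:
  assumes B: "independent B" "finite B" and AB: "A \<subseteq> B"
    and x1: "x \<in> span A" and x2: "x \<in> span (B - A)"
  shows "x = 0"
proof -
  have fA: "finite A" using B AB finite_subset by blast
  have fC: "finite (B - A)" using B by simp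
  obtain u where u: "x = (\<Sum>v\<in>A. u v *s v)" using x1 span_finite[OF fA] by auto
  obtain w where w: "x = (\<Sum>v\<in>B - A. w v *s v)" using x2 span_finite[OF fC] by auto
  define t where "t v = (if v \<in> A then u v else - w v)" for v
  have "(\<Sum>v\<in>B. t v *s v) = (\<Sum>v\<in>A. t v *s v) + (\<Sum>v\<in>B - A. t v *s v)"
    using sum.subset_diff[OF AB B(2)] by (simp add: add.commute)
  also have "(\<Sum>v\<in>A. t v *s v) = x" unfolding u t_def by (rule sum.cong) auto
  also have "(\<Sum>v\<in>B - A. t v *s v) = - x" unfolding w t_def
    by (simp add: sum_negf[symmetric])
  finally have z: "(\<Sum>v\<in>B. t v *s v) = 0" by simp
  have "\<forall>v\<in>A. u v = 0"
  proof
    fix v assume "v \<in> A"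
    then have "t v = 0" using independentD[OF B(1) B(2) subset_refl z] AB by auto
    then show "u v = 0" using \<open>v \<in> A\<close> by (simp add: t_def)
  qed
  then show ?thesis unfolding u by simp
qed

end

context vector_space_pair begin

lemma dim_image_eq':
  assumes lf: "Vector_Spaces.linear s1 s2 f"
    and fi: "inj_on f (vs1.span S)"
  shows "vs2.dim (f ` S) = vs1.dim S"
proof -
  interpret lf: Vector_Spaces.linear s1 s2 f by fact
  obtain B where B: "B \<subseteq> S" "vs1.independent B" "S \<subseteq> vs1.span B" "card B = vs1.dim S"
    using vs1.basis_exists[of S] by auto
  then have "vs1.span S = vs1.span B"
    using vs1.span_mono[of B S] vs1.span_mono[of S "vs1.span B"] vs1.span_span[of B] by auto
  moreover have "card (f ` B) = card B"
    using assms card_image[of f B] inj_on_subset[of f "vs1.span S" B] B vs1.span_superset by auto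
  moreover have "(f ` B) \<subseteq> (f ` S)"
    using B by auto
  ultimately show ?thesis
    by (metis B(2) B(4) fi lf.dependent_inj_imageD lf.span_image vs2.dim_eq_card_independent vs2.dim_span)
qed

lemma rank_nullity_sub:
  assumes lf: "Vector_Spaces.linear s1 s2 g" and V: "vs1.subspace V"
    and F: "finite F" "V \<subseteq> vs1.span F"
  shows "vs1.dim V = vs1.dim {x\<in>V. g x = 0} + vs2.dim (g ` V)"
proof -
  interpret lf: Vector_Spaces.linear s1 s2 g by fact
  define K where "K = {x\<in>V. g x = 0}"
  obtain A where A: "A \<subseteq> K" "vs1.independent A" "K \<subseteq> vs1.span A" "card A = vs1.dim K"
    using vs1.basis_exists[of K] by auto
  have AV: "A \<subseteq> V" using A(1) K_def by auto
  obtain B where B: "A \<subseteq> B" "B \<subseteq> V" "vs1.independent B" "V \<subseteq> vs1.span B"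
    using vs1.maximal_independent_subset_extend[OF AV A(2)] by blast
  have fB: "finite B" using vs1.independent_span_bound[OF F(1) B(3)] B(2) F(2) by blast
  have spB: "vs1.span B = V"
    using B(2,4) V vs1.span_minimal by blast
  have cB: "card B = vs1.dim V"
    using vs1.basis_card_eq_dim[OF B(2) B(4) B(3)] .
  define C where "C = B - A"
  have indC: "vs1.independent C" using B(3) vs1.independent_mono C_def by blast
  have fC: "finite C" using fB C_def by simp
  have cBAC: "card B = card A + card C"
    using card_Diff_subset[OF finite_subset[OF B(1) fB] B(1)] card_mono[OF fB B(1)] C_def by simp
  have img: "g ` V = vs2.span (g ` C)"
  proof -
    have "g ` V = vs2.span (g ` B)" using lf.span_image spB by simp
    also have "vs2.span (g ` B) = vs2.span (g ` C)"
    proof (rule vs2.span_eq[THEN iffD2], rule conjI)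
      show "g ` B \<subseteq> vs2.span (g ` C)"
      proof
        fix y assume "y \<in> g ` B"
        then obtain b where b: "b \<in> B" "y = g b" by blast
        show "y \<in> vs2.span (g ` C)"
        proof (cases "b \<in> A")
          case True
          then have "y = 0" using A(1) K_def b by auto
          then show ?thesis by (simp add: vs2.span_zero)
        next
          case False
          then have "b \<in> C" using b C_def by simp
          then show ?thesis using b(2) by (auto intro: vs2.span_base)
        qed
      qed
      show "g ` C \<subseteq> vs2.span (g ` B)" using C_def by (auto intro: vs2.span_base)
    qed
    finally show ?thesis .
  qed
  have inj: "inj_on g (vs1.span C)"
  proof (subst lf.inj_on_iff_eq_0[OF vs1.subspace_span], intro ballI impI)
    fix x assume x: "x \<in> vs1.span C" "g x = 0"
    have "x \<in> V" using x(1) spB vs1.span_mono[of C B] C_def by blast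
    then have "x \<in> K" using x(2) K_def by simp
    then have "x \<in> vs1.span A" using A(3) by blast
    then show "x = 0" using vs1.indep_span_disjoint[OF B(3) fB B(1)] x(1) C_def by blast
  qed
  have "vs2.dim (g ` V) = card C"
    using img dim_image_eq'[OF lf inj] vs1.dim_eq_card_independent[OF indC] vs2.dim_span by simp
  then show ?thesis using cB cBAC A(4) K_def by simp
qed

end

lemma vs_module: "module (vscale :: 'k::field \<Rightarrow> ('u \<Rightarrow> 'k) \<Rightarrow> _)"
  using vs_vscale by (simp add: vector_space_def module_def)

lemma hs_module: "module (hscale :: 'k::field \<Rightarrow> ('v \<Rightarrow> ('x \<Rightarrow> 'k) \<Rightarrow> ('w \<Rightarrow> 'k)) \<Rightarrow> _)"
  using vs_hscale by (simp add: vector_space_def module_def)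

lemma vsubspace_iff: "vsubspace V \<longleftrightarrow> 0 \<in> V \<and> (\<forall>x\<in>V. \<forall>y\<in>V. x + y \<in> V) \<and> (\<forall>c. \<forall>x\<in>V. vscale c x \<in> V)"
  by (simp add: vsubspace_def module.subspace_def[OF vs_module])

lemma vsub_0: "vsubspace V \<Longrightarrow> 0 \<in> V" by (simp add: vsubspace_iff)
lemma vsub_add: "vsubspace V \<Longrightarrow> x \<in> V \<Longrightarrow> y \<in> V \<Longrightarrow> x + y \<in> V" by (simp add: vsubspace_iff)
lemma vsub_scale: "vsubspace V \<Longrightarrow> x \<in> V \<Longrightarrow> vscale c x \<in> V" by (simp add: vsubspace_iff)

lemma vsub_sum: "vsubspace V \<Longrightarrow> (\<And>p. p \<in> A \<Longrightarrow> w p \<in> V) \<Longrightarrow> sum w A \<in> V"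
proof (induction A rule: infinite_finite_induct)
  case (infinite A) then show ?case using vsub_0[of V] sum.infinite[of A w] by metis
next
  case empty then show ?case using vsub_0[of V] sum.empty[of w] by metis
next
  case (insert x F)
  have "sum w (insert x F) = w x + sum w F" by (rule sum.insert[OF insert(1,2)])
  then show ?case using insert vsub_add by (metis insertI1 insertI2)
qed

lemma lin_on_0: "lin_on V f \<Longrightarrow> 0 \<in> V \<Longrightarrow> f 0 = 0"
  unfolding lin_on_def by (metis add.right_neutral add_left_cancel)

lemma lin_on_add: "lin_on V f \<Longrightarrow> x \<in> V \<Longrightarrow> y \<in> V \<Longrightarrow> f (x + y) = f x + f y"
  unfolding lin_on_def by blast

lemma lin_on_scale: "lin_on V f \<Longrightarrow> x \<in> V \<Longrightarrow> f (vscale c x) = vscale c (f x)"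
  unfolding lin_on_def by blast

lemma lin_on_sum:
  assumes "lin_on V f" "vsubspace V" "\<And>p. p \<in> A \<Longrightarrow> w p \<in> V"
  shows "f (sum w A) = (\<Sum>p\<in>A. f (w p))"
  using assms(3)
proof (induction A rule: infinite_finite_induct)
  case (infinite A) then show ?case using lin_on_0[OF assms(1) vsub_0[OF assms(2)]] sum.infinite[of A w] sum.infinite[of A "\<lambda>p. f (w p)"] by metis
next
  case empty then show ?case using lin_on_0[OF assms(1) vsub_0[OF assms(2)]] sum.empty[of w] sum.empty[of "\<lambda>p. f (w p)"] by metis
next
  case (insert x F)
  have "sum w F \<in> V" using insert vsub_sum[OF assms(2)] by blast
  have e1: "sum w (insert x F) = w x + sum w F" by (rule sum.insert[OF insert(1,2)])
  have e2: "(\<Sum>p\<in>insert x F. f (w p)) = f (w x) + (\<Sum>p\<in>F. f (w p))" by (rule sum.insert[OF insert(1,2)])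
  have "w x \<in> V" using insert by blast
  have ih: "f (sum w F) = (\<Sum>p\<in>F. f (w p))" using insert by blast
  show ?case by (simp only: e1 e2 lin_on_add[OF assms(1) \<open>w x \<in> V\<close> \<open>sum w F \<in> V\<close>] ih)
qed

lemma vscale_sum: "vscale c (sum w A) = (\<Sum>p\<in>A. vscale c (w p))"
  by (induction A rule: infinite_finite_induct) (auto simp: vscale_def fun_eq_iff algebra_simps)

lemma vscale_apply: "vscale c v u = c * v u" by (simp add: vscale_def)

lemma vscale_0[simp]: "vscale 0 v = 0" "vscale c 0 = 0" by (auto simp: vscale_def fun_eq_iff)

lemma vsp_pair: "vector_space_pair (vscale :: 'k::field \<Rightarrow> ('u \<Rightarrow> 'k) \<Rightarrow> _) (vscale :: 'k \<Rightarrow> ('w \<Rightarrow> 'k) \<Rightarrow> _)"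
  by (simp add: vector_space_pair_def vs_vscale)

lemma hsp_pair: "vector_space_pair (hscale :: 'k::field \<Rightarrow> ('v \<Rightarrow> ('x \<Rightarrow> 'k) \<Rightarrow> ('w \<Rightarrow> 'k)) \<Rightarrow> _) (vscale :: 'k \<Rightarrow> ('u \<Rightarrow> 'k) \<Rightarrow> _)"
  by (simp add: vector_space_pair_def vs_vscale vs_hscale)

lemma lin_on_extend:
  fixes f :: "('u \<Rightarrow> 'k::field) \<Rightarrow> ('w \<Rightarrow> 'k)"
  assumes V: "vsubspace V" and f: "lin_on V f"
  shows "\<exists>g. Vector_Spaces.linear vscale vscale g \<and> (\<forall>x\<in>V. g x = f x)"
proof -
  interpret P: vector_space_pair "vscale::'k \<Rightarrow> ('u\<Rightarrow>'k) \<Rightarrow> _" "vscale::'k \<Rightarrow> ('w\<Rightarrow>'k) \<Rightarrow> _"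
    by (rule vsp_pair)
  obtain B where B: "B \<subseteq> V" "P.vs1.independent B" "V \<subseteq> P.vs1.span B" "card B = P.vs1.dim V"
    by (rule P.vs1.basis_exists[of V])
  obtain g where g: "Vector_Spaces.linear vscale vscale g" "\<forall>x\<in>B. g x = f x"
    using P.linear_independent_extend[OF B(2)] by blast
  interpret g: Vector_Spaces.linear "vscale::'k \<Rightarrow> ('u\<Rightarrow>'k) \<Rightarrow> _" "vscale::'k \<Rightarrow> ('w\<Rightarrow>'k) \<Rightarrow> _" g
    by (rule g(1))
  have sub: "P.vs1.subspace {x\<in>V. g x = f x}"
    unfolding module.subspace_def[OF P.vs1.module_axioms]
  proof (intro conjI ballI allI)
    show "0 \<in> {x \<in> V. g x = f x}" using vsub_0[OF V] lin_on_0[OF f] g.zero by simp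
    fix x y assume "x \<in> {x \<in> V. g x = f x}" "y \<in> {x \<in> V. g x = f x}"
    then show "x + y \<in> {x \<in> V. g x = f x}" using vsub_add[OF V] lin_on_add[OF f] g.add by simp
  next
    fix c x assume "x \<in> {x \<in> V. g x = f x}"
    then show "vscale c x \<in> {x \<in> V. g x = f x}" using vsub_scale[OF V] lin_on_scale[OF f] g.scale by simp
  qed
  have "\<forall>x\<in>V. g x = f x"
  proof
    fix x assume "x \<in> V"
    then have "x \<in> P.vs1.span B" using B(3) by blast
    then have "x \<in> {x\<in>V. g x = f x}"
      by (rule P.vs1.span_subspace_induct[OF _ sub]) (use B g(2) in auto)
    then show "g x = f x" by simp
  qed
  then show ?thesis using g(1) by blast
qed

lemma rank_nullity_lin_on:
  fixes f :: "('u \<Rightarrow> 'k::field) \<Rightarrow> ('w \<Rightarrow> 'k)"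
  assumes V: "vsubspace V" "fin_dim V" and f: "lin_on V f"
  shows "vdim V = vdim {x\<in>V. f x = 0} + vdim (f ` V)"
proof -
  interpret P: vector_space_pair "vscale::'k \<Rightarrow> ('u\<Rightarrow>'k) \<Rightarrow> _" "vscale::'k \<Rightarrow> ('w\<Rightarrow>'k) \<Rightarrow> _"
    by (rule vsp_pair)
  obtain g where g: "Vector_Spaces.linear vscale vscale g" "\<forall>x\<in>V. g x = f x"
    using lin_on_extend[OF V(1) f] by blast
  obtain F where F: "finite F" "F \<subseteq> V" "V \<subseteq> P.vs1.span F" using V(2) unfolding fin_dim_def by blast
  have "P.vs1.dim V = P.vs1.dim {x\<in>V. g x = 0} + P.vs2.dim (g ` V)"
    using P.rank_nullity_sub[OF g(1) _ F(1) F(3)] V(1) unfolding vsubspace_def by blast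
  moreover have "{x\<in>V. g x = 0} = {x\<in>V. f x = 0}" using g(2) by auto
  moreover have "g ` V = f ` V" using g(2) by auto
  ultimately show ?thesis unfolding vdim_def by simp
qed

lemma is_path_Cons:
  "is_path Q (s, c # w) \<longleftrightarrow> is_path Q (s, w) \<and> c \<in> arrs Q \<and> src Q c = path_end Q (s, w)"
proof (cases w)
  case Nil
  then show ?thesis by (auto simp: is_path_def path_end_def)
next
  case (Cons d w')
  have "(\<forall>k. Suc k < length (c # d # w') \<longrightarrow> src Q ((c # d # w') ! k) = tgt Q ((c # d # w') ! Suc k))
    \<longleftrightarrow> src Q c = tgt Q d \<and> (\<forall>k. Suc k < length (d # w') \<longrightarrow> src Q ((d # w') ! k) = tgt Q ((d # w') ! Suc k))"
    (is "?L \<longleftrightarrow> ?R")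
  proof
    assume L: ?L
    show ?R
    proof (intro conjI allI impI)
      show "src Q c = tgt Q d" using L[rule_format, of 0] by simp
      fix k assume "Suc k < length (d # w')"
      then show "src Q ((d # w') ! k) = tgt Q ((d # w') ! Suc k)" using L[rule_format, of "Suc k"] by simp
    qed
  next
    assume R: ?R
    show ?L
    proof (intro allI impI)
      fix k assume k: "Suc k < length (c # d # w')"
      show "src Q ((c # d # w') ! k) = tgt Q ((c # d # w') ! Suc k)"
      proof (cases k)
        case 0 then show ?thesis using R by simp
      next
        case (Suc k') then show ?thesis using R k by simp
      qed
    qed
  qed
  then show ?thesis using Cons by (auto simp: is_path_def path_end_def)
qed

lemma nz_path_Cons:
  "nz_path Q I (s, c # w) \<longleftrightarrow> nz_path Q I (s, w) \<and> c \<in> arrs Q \<and> src Q c = path_end Q (s, w)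
     \<and> (w \<noteq> [] \<longrightarrow> (c, hd w) \<notin> I)"
proof -
  have "(\<forall>k. Suc k < length (c # w) \<longrightarrow> ((c # w) ! k, (c # w) ! Suc k) \<notin> I)
     \<longleftrightarrow> (w \<noteq> [] \<longrightarrow> (c, hd w) \<notin> I) \<and> (\<forall>k. Suc k < length w \<longrightarrow> (w ! k, w ! Suc k) \<notin> I)"
    (is "?L \<longleftrightarrow> ?R")
  proof
    assume L: ?L
    show ?R
    proof (intro conjI allI impI)
      assume "w \<noteq> []" then show "(c, hd w) \<notin> I" using L[rule_format, of 0] by (cases w) auto
    next
      fix k assume "Suc k < length w"
      then show "(w ! k, w ! Suc k) \<notin> I" using L[rule_format, of "Suc k"] by simp
    qed
  next
    assume R: ?R
    show ?L
    proof (intro allI impI)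
      fix k assume k: "Suc k < length (c # w)"
      show "((c # w) ! k, (c # w) ! Suc k) \<notin> I"
      proof (cases k)
        case 0 then show ?thesis using R k by (cases w) auto
      next
        case (Suc k') then show ?thesis using R k by simp
      qed
    qed
  qed
  then show ?thesis unfolding nz_path_def using is_path_Cons[of Q s c w] by auto
qed

lemma is_path_fst: "is_path Q p \<Longrightarrow> fst p \<in> verts Q" by (simp add: is_path_def)

lemma path_end_verts:
  assumes "is_path Q p" "\<forall>a\<in>arrs Q. tgt Q a \<in> verts Q"
  shows "path_end Q p \<in> verts Q"
  using assms by (cases p; cases "snd p") (auto simp: path_end_def is_path_def)

fun Nw :: "('v, 'a, 'u, 'k) rep \<Rightarrow> 'a list \<Rightarrow> ('u \<Rightarrow> 'k) \<Rightarrow> ('u \<Rightarrow> 'k)" where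
  "Nw N [] x = x"
| "Nw N (c # cs) x = rmap N c (Nw N cs x)"

lemma Nw_space:
  assumes N: "is_module Q I N" and p: "is_path Q (s, ws @ g)" and x: "x \<in> space N (path_end Q (s, g))"
  shows "Nw N ws x \<in> space N (path_end Q (s, ws @ g))"
  using p
proof (induction ws)
  case Nil then show ?case using x by simp
next
  case (Cons c ws)
  have c: "is_path Q (s, ws @ g)" "c \<in> arrs Q" "src Q c = path_end Q (s, ws @ g)"
    using Cons.prems is_path_Cons[of Q s c "ws @ g"] by auto
  have "Nw N ws x \<in> space N (src Q c)" using Cons.IH c by simp
  then have "rmap N c (Nw N ws x) \<in> space N (tgt Q c)" using N c(2) unfolding is_module_def by blast
  then show ?case by (simp add: path_end_def)
qed

definition dl :: "'p \<Rightarrow> 'p \<Rightarrow> 'k::field" where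
  "dl p = (\<lambda>q. if q = p then 1 else 0)"

lemma space_pm: "space (path_module Q S) j = {v. \<forall>q. v q \<noteq> 0 \<longrightarrow> q \<in> S \<and> path_end Q q = j}"
  by (simp add: path_module_def)

lemma rmap_pm: "rmap (path_module Q S) c v = (\<lambda>q. case snd q of [] \<Rightarrow> 0
        | b # q' \<Rightarrow> (if b = c \<and> q \<in> S \<and> (fst q, q') \<in> S then v (fst q, q') else 0))"
  by (simp add: path_module_def)

lemma pm_subspace: "vsubspace (space (path_module Q S) j)"
  unfolding vsubspace_iff space_pm by (auto simp: vscale_def) (metis add.right_neutral)+

lemma fsum_apply: "(\<Sum>p\<in>A. f p) q = (\<Sum>p\<in>A. f p q)"
  by (induction A rule: infinite_finite_induct) auto

lemma pm_decomp:
  assumes "finite S" "v \<in> space (path_module Q S) j"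
  shows "v = (\<Sum>p\<in>S. vscale (v p) (dl p))"
proof
  fix q
  have "(\<Sum>p\<in>S. vscale (v p) (dl p)) q = (\<Sum>p\<in>S. v p * (if q = p then 1 else 0))"
    by (simp add: fsum_apply vscale_def dl_def)
  also have "\<dots> = (if q \<in> S then v q else 0)"
  proof -
    have e: "(\<lambda>p. v p * (if q = p then 1 else 0)) = (\<lambda>p. if q = p then v p else 0)" by auto
    show ?thesis unfolding e using assms(1) by (simp add: sum.delta')
  qed
  also have "\<dots> = v q" using assms(2) unfolding space_pm by (cases q) auto
  finally show "v q = (\<Sum>p\<in>S. vscale (v p) (dl p)) q" by simp
qed

lemma dl_space: "p \<in> S \<Longrightarrow> dl p \<in> space (path_module Q S) (path_end Q p)"
  by (auto simp: space_pm dl_def)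

lemma rmap_N_0:
  assumes N: "is_module Q I N" and c: "c \<in> arrs Q" "src Q c \<in> verts Q"
  shows "rmap N c 0 = 0"
  using N c unfolding is_module_def by (metis lin_on_0 vsub_0)

lemma Hom_subspace:
  fixes M :: "('v, 'a, 'x, 'k::field) rep" and N :: "('v, 'a, 'u, 'k) rep"
  assumes NS: "\<forall>i\<in>verts Q. vsubspace (space N i)"
    and AV: "\<forall>a\<in>arrs Q. src Q a \<in> verts Q \<and> tgt Q a \<in> verts Q"
    and NL: "\<forall>a\<in>arrs Q. lin_on (space N (src Q a)) (rmap N a)"
  shows "module.subspace hscale (Hom Q M N)"
  unfolding module.subspace_def[OF hs_module]
proof (intro conjI ballI allI)
  show "0 \<in> Hom Q M N"
    unfolding Hom_def
  proof (intro CollectI conjI allI impI ballI)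
    fix a assume a: "a \<in> arrs Q"
    fix x
    show "(0 :: 'v \<Rightarrow> ('x \<Rightarrow> 'k) \<Rightarrow> ('u \<Rightarrow> 'k)) (tgt Q a) (rmap M a x) = rmap N a ((0 :: 'v \<Rightarrow> ('x \<Rightarrow> 'k) \<Rightarrow> ('u \<Rightarrow> 'k)) (src Q a) x)"
      using lin_on_0[OF NL[rule_format, OF a] vsub_0] NS AV a by simp
  qed (auto simp: lin_on_def vsub_0 NS)
next
  fix f g assume f: "f \<in> Hom Q M N" and g: "g \<in> Hom Q M N"
  show "f + g \<in> Hom Q M N"
    unfolding Hom_def
  proof (intro CollectI conjI allI impI ballI)
    fix i assume "i \<notin> verts Q" then show "(f + g) i = (\<lambda>x. 0)"
      using f g unfolding Hom_def by auto
  next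
    fix i assume i: "i \<in> verts Q"
    have lf: "lin_on (space M i) (f i)" and lg: "lin_on (space M i) (g i)" using f g i unfolding Hom_def by auto
    show "lin_on (space M i) ((f + g) i)"
      using lf lg unfolding lin_on_def by (auto simp: vscale_def fun_eq_iff algebra_simps)
    fix x
    { assume "x \<in> space M i"
      then show "(f + g) i x \<in> space N i"
        using f g i NS vsub_add unfolding Hom_def by fastforce }
    { assume "x \<notin> space M i"
      then show "(f + g) i x = 0" using f g i unfolding Hom_def by auto }
  next
    fix a x assume a: "a \<in> arrs Q" and x: "x \<in> space M (src Q a)"
    have "f (src Q a) x \<in> space N (src Q a)" "g (src Q a) x \<in> space N (src Q a)"
      using f g a x AV unfolding Hom_def by auto
    then show "(f + g) (tgt Q a) (rmap M a x) = rmap N a ((f + g) (src Q a) x)"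
      using f g a x lin_on_add[OF NL[rule_format, OF a]] unfolding Hom_def by auto
  qed
next
  fix c f assume f: "f \<in> Hom Q M N"
  show "hscale c f \<in> Hom Q M N"
    unfolding Hom_def
  proof (intro CollectI conjI allI impI ballI)
    fix i assume "i \<notin> verts Q" then show "hscale c f i = (\<lambda>x. 0)"
      using f unfolding Hom_def by (auto simp: hscale_def)
  next
    fix i assume i: "i \<in> verts Q"
    have lf: "lin_on (space M i) (f i)" using f i unfolding Hom_def by auto
    show "lin_on (space M i) (hscale c f i)"
      using lf unfolding lin_on_def by (auto simp: hscale_def vscale_def fun_eq_iff algebra_simps)
    fix x
    { assume "x \<in> space M i"
      then show "hscale c f i x \<in> space N i"
        using f i NS vsub_scale unfolding Hom_def hscale_def by fastforce }
    { assume "x \<notin> space M i"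
      then show "hscale c f i x = 0" using f i unfolding Hom_def hscale_def by auto }
  next
    fix a x assume a: "a \<in> arrs Q" and x: "x \<in> space M (src Q a)"
    have "f (src Q a) x \<in> space N (src Q a)"
      using f a x AV unfolding Hom_def by auto
    then show "hscale c f (tgt Q a) (rmap M a x) = rmap N a (hscale c f (src Q a) x)"
      using f a x lin_on_scale[OF NL[rule_format, OF a]] unfolding Hom_def hscale_def by auto
  qed
qed

locale hp =
  fixes Q :: "('v, 'a) quiver" and I :: "('a \<times> 'a) set" and N :: "('v, 'a, 'u, 'k::field) rep"
    and S :: "('v \<times> 'a list) set" and s :: 'v and g :: "'a list"
  assumes gen: "gentle Q I"
    and modN: "is_module Q I N"
    and S_def: "S = {p. nz_path Q I p \<and> fst p = s \<and> (\<exists>qs. snd p = qs @ g)}"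
    and p0: "nz_path Q I (s, g)"
begin

abbreviation PM :: "('v, 'a, 'v \<times> 'a list, 'k) rep" where "PM \<equiv> path_module Q S"

definition j0 where "j0 = path_end Q (s, g)"
definition K where "K = {x\<in>space N j0. \<forall>c\<in>arrs Q. src Q c = j0 \<and> (s, c # g) \<notin> S \<longrightarrow> rmap N c x = 0}"
definition pre :: "'v \<times> 'a list \<Rightarrow> 'a list" where "pre p = take (length (snd p) - length g) (snd p)"
definition W where "W x p = Nw N (pre p) x"
definition psi where
  "psi x = (\<lambda>j v. if j \<in> verts Q \<and> v \<in> space PM j then (\<Sum>p\<in>S. vscale (v p) (W x p)) else 0)"
definition phi :: "('v \<Rightarrow> ('v \<times> 'a list \<Rightarrow> 'k) \<Rightarrow> ('u \<Rightarrow> 'k)) \<Rightarrow> ('u \<Rightarrow> 'k)" where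
  "phi f = f j0 (dl (s, g))"

lemma AV: "\<forall>a\<in>arrs Q. src Q a \<in> verts Q \<and> tgt Q a \<in> verts Q"
  using gen unfolding gentle_def by blast

lemma finS: "finite S"
proof -
  have "finite {p. nz_path Q I p}" using gen unfolding gentle_def by blast
  then show ?thesis unfolding S_def by (rule finite_subset[rotated]) auto
qed

lemma p0S: "(s, g) \<in> S" using p0 unfolding S_def by auto

lemma S_form: "p \<in> S \<Longrightarrow> fst p = s \<and> snd p = pre p @ g \<and> nz_path Q I p"
  unfolding S_def pre_def by auto

lemma pre_eq: "pre (s, qs @ g) = qs" by (simp add: pre_def)

lemma j0V: "j0 \<in> verts Q"
  using p0 AV path_end_verts[of Q "(s, g)"] unfolding j0_def nz_path_def by blast

lemma NS: "\<forall>i\<in>verts Q. vsubspace (space N i)" using modN unfolding is_module_def by blast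
lemma NL: "\<forall>a\<in>arrs Q. lin_on (space N (src Q a)) (rmap N a)" using modN unfolding is_module_def by blast
lemma NM: "a \<in> arrs Q \<Longrightarrow> x \<in> space N (src Q a) \<Longrightarrow> rmap N a x \<in> space N (tgt Q a)"
  using modN unfolding is_module_def by blast
lemma NR: "(a, b) \<in> I \<Longrightarrow> x \<in> space N (src Q b) \<Longrightarrow> rmap N a (rmap N b x) = 0"
  using modN unfolding is_module_def by blast

lemma pend_verts: "p \<in> S \<Longrightarrow> path_end Q p \<in> verts Q"
  using S_form AV path_end_verts[of Q p] unfolding nz_path_def by blast

lemma W_space: "p \<in> S \<Longrightarrow> x \<in> space N j0 \<Longrightarrow> W x p \<in> space N (path_end Q p)"
proof -
  assume p: "p \<in> S" and x: "x \<in> space N j0"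
  have e: "p = (s, pre p @ g)" using S_form[OF p] by (cases p) auto
  have "is_path Q (s, pre p @ g)" using S_form[OF p] e unfolding nz_path_def by metis
  from Nw_space[OF modN this] x e show ?thesis unfolding W_def j0_def by metis
qed

lemma Hsub: "module.subspace hscale (Hom Q PM N)"
  by (rule Hom_subspace[OF NS AV NL])

end

context hp begin

lemma rmap_dl:
  assumes p: "(s, c # w) \<in> S" and p': "(s, w) \<in> S"
  shows "rmap PM c (dl (s, w)) = dl (s, c # w)"
proof
  fix q :: "'v \<times> 'a list"
  obtain q1 q2 where q: "q = (q1, q2)" by (cases q)
  show "rmap PM c (dl (s, w)) q = dl (s, c # w) q"
  proof (cases q2)
    case Nil then show ?thesis using q by (simp add: rmap_pm dl_def)
  next
    case (Cons b q')
    show ?thesis using q Cons p p' by (auto simp: rmap_pm dl_def)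
  qed
qed

lemma Hom_commute:
  "f \<in> Hom Q PM N \<Longrightarrow> a \<in> arrs Q \<Longrightarrow> x \<in> space PM (src Q a) \<Longrightarrow>
     f (tgt Q a) (rmap PM a x) = rmap N a (f (src Q a) x)"
  unfolding Hom_def by blast

lemma Hom_lin: "f \<in> Hom Q PM N \<Longrightarrow> i \<in> verts Q \<Longrightarrow> lin_on (space PM i) (f i)"
  unfolding Hom_def by blast

lemma Hom_in: "f \<in> Hom Q PM N \<Longrightarrow> i \<in> verts Q \<Longrightarrow> x \<in> space PM i \<Longrightarrow> f i x \<in> space N i"
  unfolding Hom_def by blast

lemma Hom_out: "f \<in> Hom Q PM N \<Longrightarrow> i \<notin> verts Q \<Longrightarrow> f i x = 0"
  unfolding Hom_def by auto

lemma Hom_out2: "f \<in> Hom Q PM N \<Longrightarrow> i \<in> verts Q \<Longrightarrow> x \<notin> space PM i \<Longrightarrow> f i x = 0"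
  unfolding Hom_def by blast

lemma Hom_zero_dl:
  assumes f: "f \<in> Hom Q PM N" and z: "phi f = 0"
  shows "(s, qs @ g) \<in> S \<Longrightarrow> f (path_end Q (s, qs @ g)) (dl (s, qs @ g)) = 0"
proof (induction qs)
  case Nil then show ?case using z unfolding phi_def j0_def by simp
next
  case (Cons c qs)
  have nz: "nz_path Q I (s, c # qs @ g)" using S_form[OF Cons.prems] by simp
  have c: "nz_path Q I (s, qs @ g)" "c \<in> arrs Q" "src Q c = path_end Q (s, qs @ g)"
    using nz_path_Cons[of Q I s c "qs @ g"] nz by simp_all
  have p': "(s, qs @ g) \<in> S" using c(1) unfolding S_def by auto
  have ih: "f (src Q c) (dl (s, qs @ g)) = 0" using Cons.IH p' c(3) by (simp add: zero_fun_def)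
  have "dl (s, qs @ g) \<in> space PM (src Q c)" using dl_space[OF p', of Q] c(3) by simp
  then have "f (tgt Q c) (rmap PM c (dl (s, qs @ g))) = rmap N c 0"
    using Hom_commute[OF f c(2)] ih by simp
  also have "\<dots> = 0" using rmap_N_0[OF modN c(2)] AV c(2) by blast
  finally show ?case using rmap_dl[OF _ p'] Cons.prems by (simp add: path_end_def)
qed

lemma Hom_zero:
  assumes f: "f \<in> Hom Q PM N" and z: "phi f = 0"
  shows "f = 0"
proof (rule ext, rule ext)
  fix j v
  show "f j v = (0 :: 'v \<Rightarrow> ('v \<times> 'a list \<Rightarrow> 'k) \<Rightarrow> ('u \<Rightarrow> 'k)) j v"
  proof (cases "j \<in> verts Q \<and> v \<in> space PM j")
    case False then show ?thesis using Hom_out[OF f] Hom_out2[OF f] by auto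
  next
    case True
    note jv = True
    have dl0: "\<And>p. p \<in> S \<Longrightarrow> f (path_end Q p) (dl p) = 0"
    proof -
      fix p assume p: "p \<in> S"
      have e: "p = (s, pre p @ g)" using S_form[OF p] by (cases p) auto
      show "f (path_end Q p) (dl p) = 0" using Hom_zero_dl[OF f z, of "pre p"] p e by metis
    qed
    have terms: "\<And>p. p \<in> S \<Longrightarrow> vscale (v p) (dl p) \<in> space PM j \<and> f j (vscale (v p) (dl p)) = 0"
    proof -
      fix p assume p: "p \<in> S"
      show "vscale (v p) (dl p) \<in> space PM j \<and> f j (vscale (v p) (dl p)) = 0"
      proof (cases "v p = 0")
        case True
        then show ?thesis using lin_on_0[OF Hom_lin[OF f] vsub_0[OF pm_subspace]] jv vsub_0[OF pm_subspace] by simp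
      next
        case False
        then have pj: "path_end Q p = j" using jv unfolding space_pm by blast
        have "dl p \<in> space PM j" using dl_space[OF p, of Q] pj by simp
        then show ?thesis using lin_on_scale[OF Hom_lin[OF f], of j "dl p" "v p"] jv dl0[OF p] pj
            vsub_scale[OF pm_subspace] by simp
      qed
    qed
    have "f j v = f j (\<Sum>p\<in>S. vscale (v p) (dl p))" using pm_decomp[OF finS, of v Q j] True by simp
    also have "\<dots> = (\<Sum>p\<in>S. f j (vscale (v p) (dl p)))"
      by (rule lin_on_sum[OF Hom_lin[OF f] pm_subspace]) (use True terms in auto)
    also have "\<dots> = 0" using terms by simp
    finally show ?thesis by simp
  qed
qed

end

context hp begin

lemma rmap_pm_space:
  assumes a: "a \<in> arrs Q" and v: "v \<in> space PM (src Q a)"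
  shows "rmap PM a v \<in> space PM (tgt Q a)"
  unfolding space_pm
proof (intro CollectI allI impI)
  fix q :: "'v \<times> 'a list"
  assume nz: "rmap PM a v q \<noteq> 0"
  obtain q1 q2 where q: "q = (q1, q2)" by (cases q)
  show "q \<in> S \<and> path_end Q q = tgt Q a"
  proof (cases q2)
    case Nil then show ?thesis using nz q by (simp add: rmap_pm)
  next
    case (Cons b q')
    then show ?thesis using nz q by (auto simp: rmap_pm path_end_def split: if_splits)
  qed
qed

lemma phi_K: "f \<in> Hom Q PM N \<Longrightarrow> phi f \<in> K"
proof -
  assume f: "f \<in> Hom Q PM N"
  have dl0: "dl (s, g) \<in> space PM j0" using dl_space[OF p0S, of Q] unfolding j0_def .
  have "phi f \<in> space N j0" using Hom_in[OF f j0V dl0] unfolding phi_def .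
  moreover have "rmap N c (phi f) = 0" if c: "c \<in> arrs Q" "src Q c = j0" "(s, c # g) \<notin> S" for c
  proof -
    have r0: "rmap PM c (dl (s, g)) = 0"
    proof
      fix q :: "'v \<times> 'a list"
      obtain q1 q2 where q: "q = (q1, q2)" by (cases q)
      show "rmap PM c (dl (s, g)) q = 0 q"
        using q c(3) by (cases q2) (auto simp: rmap_pm dl_def)
    qed
    have "rmap N c (phi f) = f (tgt Q c) (rmap PM c (dl (s, g)))"
      using Hom_commute[OF f c(1)] dl0 c(2) unfolding phi_def by simp
    also have "\<dots> = 0" unfolding r0
      using lin_on_0[OF Hom_lin[OF f] vsub_0[OF pm_subspace]] AV c(1) by blast
    finally show ?thesis .
  qed
  ultimately show "phi f \<in> K" unfolding K_def by blast
qed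

end

context hp begin

lemma vscale_add_left: "vscale (a + b) w = vscale a w + vscale b w"
  by (simp add: vscale_def fun_eq_iff algebra_simps)

lemma vscale_mult: "vscale (c * a) w = vscale c (vscale a w)"
  by (simp add: vscale_def fun_eq_iff algebra_simps)

lemma psi_term_space:
  assumes x: "x \<in> space N j0" and j: "j \<in> verts Q" and v: "v \<in> space PM j" and p: "p \<in> S"
  shows "vscale (v p) (W x p) \<in> space N j"
proof (cases "v p = 0")
  case True
  then show ?thesis using vsub_0[of "space N j"] NS j by simp
next
  case False
  then have "path_end Q p = j" using v unfolding space_pm by blast
  then show ?thesis using W_space[OF p x] vsub_scale NS j by metis
qed

lemma psi_val: "j \<in> verts Q \<Longrightarrow> v \<in> space PM j \<Longrightarrow> psi x j v = (\<Sum>p\<in>S. vscale (v p) (W x p))"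
  by (simp add: psi_def)

lemma psi_lin:
  assumes j: "j \<in> verts Q"
  shows "lin_on (space PM j) (psi x j)"
  unfolding lin_on_def
proof (intro conjI ballI allI impI)
  fix v w assume v: "v \<in> space PM j" and w: "w \<in> space PM j"
  have vw: "v + w \<in> space PM j" using vsub_add[OF pm_subspace v w] .
  have "psi x j (v + w) = (\<Sum>p\<in>S. vscale (v p) (W x p) + vscale (w p) (W x p))"
    unfolding psi_val[OF j vw] by (simp add: vscale_add_left)
  also have "\<dots> = psi x j v + psi x j w"
    unfolding psi_val[OF j v] psi_val[OF j w] by (rule sum.distrib)
  finally show "psi x j (v + w) = psi x j v + psi x j w" .
next
  fix c v assume v: "v \<in> space PM j"
  have cv: "vscale c v \<in> space PM j" using vsub_scale[OF pm_subspace v] .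
  have "psi x j (vscale c v) = (\<Sum>p\<in>S. vscale c (vscale (v p) (W x p)))"
    unfolding psi_val[OF j cv] by (simp add: vscale_apply vscale_mult)
  also have "\<dots> = vscale c (psi x j v)"
    unfolding psi_val[OF j v] by (rule vscale_sum[symmetric])
  finally show "psi x j (vscale c v) = vscale c (psi x j v)" .
qed

lemma psi_in:
  assumes x: "x \<in> space N j0" and j: "j \<in> verts Q" and v: "v \<in> space PM j"
  shows "psi x j v \<in> space N j"
  unfolding psi_val[OF j v]
  by (rule vsub_sum) (use NS j psi_term_space[OF x j v] in auto)

end

context hp begin

lemma psi_commute:
  assumes xK: "x \<in> K" and a: "a \<in> arrs Q" and v: "v \<in> space PM (src Q a)"
  shows "psi x (tgt Q a) (rmap PM a v) = rmap N a (psi x (src Q a) v)"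
proof -
  have x: "x \<in> space N j0" using xK unfolding K_def by blast
  have sa: "src Q a \<in> verts Q" and ta: "tgt Q a \<in> verts Q" using AV a by auto
  have rv: "rmap PM a v \<in> space PM (tgt Q a)" using rmap_pm_space[OF a v] .
  define ext where "ext p = (fst p, a # snd p)" for p :: "'v \<times> 'a list"
  define U where "U = {p\<in>S. ext p \<in> S}"
  have US: "U \<subseteq> S" unfolding U_def by blast
  have finU: "finite U" using finite_subset[OF US finS] .
  have killed: "\<forall>p\<in>S - U. vscale (v p) (rmap N a (W x p)) = 0"
  proof
    fix p assume pSU: "p \<in> S - U"
    then have p: "p \<in> S" and np: "ext p \<notin> S" unfolding U_def by auto
    show "vscale (v p) (rmap N a (W x p)) = 0"
    proof (cases "v p = 0")
      case True then show ?thesis by simp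
    next
      case False
      then have pe: "path_end Q p = src Q a" using v unfolding space_pm by blast
      have pf: "fst p = s" "snd p = pre p @ g" "nz_path Q I p" using S_form[OF p] by auto
      have pe2: "p = (s, pre p @ g)" using pf by (cases p) auto
      show ?thesis
      proof (cases "pre p")
        case Nil
        then have pp: "p = (s, g)" using pe2 by simp
        then have "src Q a = j0" using pe unfolding j0_def by simp
        moreover have "(s, a # g) \<notin> S" using np pp unfolding ext_def by simp
        ultimately have "rmap N a x = 0" using xK a unfolding K_def by blast
        moreover have "W x p = x" unfolding W_def using Nil by simp
        ultimately show ?thesis by simp
      next
        case (Cons d qs)
        have nzp: "nz_path Q I (s, d # qs @ g)" using pf pe2 Cons by (metis append_Cons)
        have dd: "nz_path Q I (s, qs @ g)" "d \<in> arrs Q" "src Q d = path_end Q (s, qs @ g)"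
          using nz_path_Cons[of Q I s d "qs @ g"] nzp by simp_all
        have ad: "(a, d) \<in> I"
        proof (rule ccontr)
          assume "(a, d) \<notin> I"
          moreover have "src Q a = path_end Q (s, d # qs @ g)" using pe pe2 Cons by simp
          ultimately have "nz_path Q I (s, a # d # qs @ g)"
            using nz_path_Cons[of Q I s a "d # qs @ g"] nzp a by simp
          then have "(s, a # d # qs @ g) \<in> S" unfolding S_def
            by (auto intro!: exI[of _ "a # d # qs"])
          then show False using np pf(1) pf(2) Cons unfolding ext_def by simp
        qed
        have ip: "is_path Q (s, qs @ g)" using dd(1) unfolding nz_path_def by simp
        have "Nw N qs x \<in> space N (src Q d)"
          using Nw_space[OF modN ip] x dd(3) unfolding j0_def by simp
        then have "rmap N a (rmap N d (Nw N qs x)) = 0" using NR[OF ad] by blast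
        moreover have "W x p = rmap N d (Nw N qs x)" unfolding W_def using Cons by simp
        ultimately show ?thesis by simp
      qed
    qed
  qed
  have termS: "\<And>p. p \<in> S \<Longrightarrow> rmap N a (vscale (v p) (W x p)) = vscale (v p) (rmap N a (W x p))"
  proof -
    fix p assume p: "p \<in> S"
    show "rmap N a (vscale (v p) (W x p)) = vscale (v p) (rmap N a (W x p))"
    proof (cases "v p = 0")
      case True then show ?thesis using rmap_N_0[OF modN a sa] by simp
    next
      case False
      then have pe: "path_end Q p = src Q a" using v unfolding space_pm by blast
      have "W x p \<in> space N (src Q a)" using W_space[OF p x] pe by simp
      then show ?thesis using lin_on_scale NL a by blast
    qed
  qed
  have "rmap N a (psi x (src Q a) v) = rmap N a (\<Sum>p\<in>S. vscale (v p) (W x p))"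
    unfolding psi_val[OF sa v] ..
  also have "\<dots> = (\<Sum>p\<in>S. rmap N a (vscale (v p) (W x p)))"
    by (rule lin_on_sum) (use NL a NS sa psi_term_space[OF x sa v] in auto)
  also have "\<dots> = (\<Sum>p\<in>S. vscale (v p) (rmap N a (W x p)))"
    by (rule sum.cong) (auto simp: termS)
  also have "\<dots> = (\<Sum>p\<in>U. vscale (v p) (rmap N a (W x p)))"
    by (rule sum.mono_neutral_right[OF finS US killed])
  finally have R: "rmap N a (psi x (src Q a) v) = (\<Sum>p\<in>U. vscale (v p) (rmap N a (W x p)))" .
  have extU: "\<And>p. p \<in> U \<Longrightarrow> W x (ext p) = rmap N a (W x p) \<and> rmap PM a v (ext p) = v p"
  proof -
    fix p assume pU: "p \<in> U"
    then have p: "p \<in> S" and ep: "ext p \<in> S" unfolding U_def by auto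
    have pf: "snd p = pre p @ g" using S_form[OF p] by auto
    have "pre (ext p) = a # pre p" unfolding pre_def ext_def using pf
      by (simp add: Suc_diff_le)
    then have "W x (ext p) = rmap N a (W x p)" unfolding W_def by simp
    moreover have "rmap PM a v (ext p) = v p" using p ep unfolding ext_def by (simp add: rmap_pm)
    ultimately show "W x (ext p) = rmap N a (W x p) \<and> rmap PM a v (ext p) = v p" by simp
  qed
  have inj: "inj_on ext U" unfolding inj_on_def ext_def by (auto simp: prod_eq_iff)
  have eUS: "ext ` U \<subseteq> S" unfolding U_def by auto
  have zero_out: "\<forall>q\<in>S - ext ` U. vscale (rmap PM a v q) (W x q) = 0"
  proof
    fix q assume qq: "q \<in> S - ext ` U"
    obtain q1 q2 where q: "q = (q1, q2)" by (cases q)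
    have "rmap PM a v q = 0"
    proof (cases q2)
      case Nil then show ?thesis using q by (simp add: rmap_pm)
    next
      case (Cons b q')
      show ?thesis
      proof (cases "b = a \<and> q \<in> S \<and> (q1, q') \<in> S")
        case True
        then have "(q1, q') \<in> U" "ext (q1, q') = q" using q Cons unfolding U_def ext_def by auto
        then show ?thesis using qq by blast
      next
        case False then show ?thesis using q Cons by (auto simp: rmap_pm)
      qed
    qed
    then show "vscale (rmap PM a v q) (W x q) = 0" by simp
  qed
  have "psi x (tgt Q a) (rmap PM a v) = (\<Sum>q\<in>S. vscale (rmap PM a v q) (W x q))"
    unfolding psi_val[OF ta rv] ..
  also have "\<dots> = (\<Sum>q\<in>ext ` U. vscale (rmap PM a v q) (W x q))"
    by (rule sum.mono_neutral_right[OF finS eUS zero_out])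
  also have "\<dots> = (\<Sum>p\<in>U. vscale (rmap PM a v (ext p)) (W x (ext p)))"
    by (rule sum.reindex[OF inj, unfolded comp_def])
  also have "\<dots> = (\<Sum>p\<in>U. vscale (v p) (rmap N a (W x p)))"
    by (rule sum.cong) (auto simp: extU)
  finally show ?thesis using R by simp
qed

end

context hp begin

lemma psi_Hom:
  assumes xK: "x \<in> K" shows "psi x \<in> Hom Q PM N"
proof -
  have x: "x \<in> space N j0" using xK unfolding K_def by blast
  show ?thesis
    unfolding Hom_def
  proof (intro CollectI conjI allI impI ballI)
    fix i assume "i \<notin> verts Q" then show "psi x i = (\<lambda>x. 0)" by (simp add: psi_def fun_eq_iff)
  next
    fix i assume i: "i \<in> verts Q"
    show "lin_on (space PM i) (psi x i)" by (rule psi_lin[OF i])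
    fix v
    { assume "v \<in> space PM i" then show "psi x i v \<in> space N i" by (rule psi_in[OF x i]) }
    { assume "v \<notin> space PM i" then show "psi x i v = 0" by (simp add: psi_def) }
  next
    fix a v assume a: "a \<in> arrs Q" and v: "v \<in> space PM (src Q a)"
    show "psi x (tgt Q a) (rmap PM a v) = rmap N a (psi x (src Q a) v)"
      by (rule psi_commute[OF xK a v])
  qed
qed

lemma phi_psi:
  assumes xK: "x \<in> K" shows "phi (psi x) = x"
proof -
  have dl0: "dl (s, g) \<in> space PM j0" using dl_space[OF p0S, of Q] unfolding j0_def .
  have "phi (psi x) = (\<Sum>p\<in>S. vscale (dl (s, g) p) (W x p))"
    unfolding phi_def psi_val[OF j0V dl0] ..
  also have "\<dots> = (\<Sum>p\<in>S. if p = (s, g) then W x p else 0)"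
    by (rule sum.cong) (auto simp: dl_def vscale_def)
  also have "\<dots> = W x (s, g)" using finS p0S by (simp add: sum.delta)
  also have "\<dots> = x" unfolding W_def pre_def by simp
  finally show ?thesis .
qed

lemma dim_main: "hdim (Hom Q PM N) = vdim K"
proof -
  interpret P: vector_space_pair "hscale :: 'k \<Rightarrow> ('v \<Rightarrow> ('v \<times> 'a list \<Rightarrow> 'k) \<Rightarrow> ('u \<Rightarrow> 'k)) \<Rightarrow> _"
      "vscale :: 'k \<Rightarrow> ('u \<Rightarrow> 'k) \<Rightarrow> _"
    by (rule hsp_pair)
  have lin: "Vector_Spaces.linear hscale vscale phi"
    unfolding Vector_Spaces.linear_iff using vs_hscale vs_vscale by (auto simp: phi_def hscale_def)
  interpret L: Vector_Spaces.linear "hscale :: 'k \<Rightarrow> ('v \<Rightarrow> ('v \<times> 'a list \<Rightarrow> 'k) \<Rightarrow> ('u \<Rightarrow> 'k)) \<Rightarrow> _"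
      "vscale :: 'k \<Rightarrow> ('u \<Rightarrow> 'k) \<Rightarrow> _" phi
    by (rule lin)
  have sp: "P.vs1.span (Hom Q PM N) = Hom Q PM N"
    using P.vs1.span_eq_iff Hsub by blast
  have inj: "inj_on phi (P.vs1.span (Hom Q PM N))"
    unfolding sp using L.inj_on_iff_eq_0[OF Hsub] Hom_zero by blast
  have img: "phi ` Hom Q PM N = K"
  proof
    show "phi ` Hom Q PM N \<subseteq> K" using phi_K by blast
    show "K \<subseteq> phi ` Hom Q PM N"
    proof
      fix x assume "x \<in> K"
      then show "x \<in> phi ` Hom Q PM N" using psi_Hom phi_psi by (metis image_eqI)
    qed
  qed
  have "P.vs2.dim (phi ` Hom Q PM N) = P.vs1.dim (Hom Q PM N)" by (rule P.dim_image_eq'[OF lin inj])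
  then show ?thesis unfolding hdim_def vdim_def img by simp
qed

end

lemma gentle_card_in:
  assumes "gentle Q I" "b \<in> arrs Q"
  shows "card {c\<in>arrs Q. src Q c = tgt Q b \<and> (c, b) \<in> I} \<le> 1"
  using assms unfolding gentle_def by (metis (no_types, lifting))

lemma gentle_finarrs: "gentle Q I \<Longrightarrow> finite (arrs Q)"
  unfolding gentle_def by (elim conjE)

lemma part_i:
  fixes Q :: "('v, 'a) quiver" and I :: "('a \<times> 'a) set"
    and N :: "('v, 'a, 'u, 'k::field) rep"
  assumes gen: "gentle Q I" and modN: "is_module Q I N" and i: "i \<in> verts Q"
  shows "vdim (space N i) = hdim (Hom Q (proj_module Q I i :: ('v, 'a, 'v \<times> 'a list, 'k) rep) N)"
proof -
  define S where "S = {p. nz_path Q I p \<and> fst p = i \<and> (\<exists>qs. snd p = qs @ ([] :: 'a list))}"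
  have p0: "nz_path Q I (i, [])" using i unfolding nz_path_def is_path_def by simp
  interpret hp Q I N S i "[]" using gen modN S_def p0 by unfold_locales auto
  have PMe: "proj_module Q I i = (path_module Q S :: ('v, 'a, 'v \<times> 'a list, 'k) rep)"
    unfolding proj_module_def S_def by simp
  have j0: "j0 = i" unfolding j0_def path_end_def by simp
  have "K = space N i"
  proof -
    have "(i, [c]) \<in> S" if "c \<in> arrs Q" "src Q c = i" for c
      using nz_path_Cons[of Q I i c "[]"] p0 that unfolding S_def by (simp add: path_end_def)
    then show ?thesis unfolding K_def j0 by auto
  qed
  then show ?thesis using dim_main PMe by simp
qed

lemma part_ii_hom:
  fixes Q :: "('v, 'a) quiver" and I :: "('a \<times> 'a) set"
    and N :: "('v, 'a, 'u, 'k::field) rep"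
  assumes gen: "gentle Q I" and modN: "is_module Q I N" and a: "a \<in> arrs Q" and b: "b \<in> arrs Q"
    and ab: "(a, b) \<in> I"
  shows "hdim (Hom Q (R_module Q I b :: ('v, 'a, 'v \<times> 'a list, 'k) rep) N)
           = vdim {x\<in>space N (src Q a). rmap N a x = 0}"
proof -
  define S where "S = {p. nz_path Q I p \<and> fst p = src Q b \<and> (\<exists>qs. snd p = qs @ [b])}"
  have AV: "\<forall>a\<in>arrs Q. src Q a \<in> verts Q \<and> tgt Q a \<in> verts Q"
    using gen unfolding gentle_def by blast
  have tb: "tgt Q b = src Q a" using gen ab unfolding gentle_def by blast
  have pe: "nz_path Q I (src Q b, [])" using AV b unfolding nz_path_def is_path_def by simp
  have p0: "nz_path Q I (src Q b, [b])"
    using nz_path_Cons[of Q I "src Q b" b "[]"] pe b by (simp add: path_end_def)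
  interpret hp Q I N S "src Q b" "[b]" using gen modN S_def p0 by unfold_locales auto
  have Se: "{p. nz_path Q I p \<and> snd p \<noteq> [] \<and> last (snd p) = b} = S"
  proof
    show "{p. nz_path Q I p \<and> snd p \<noteq> [] \<and> last (snd p) = b} \<subseteq> S"
    proof
      fix p assume p: "p \<in> {p. nz_path Q I p \<and> snd p \<noteq> [] \<and> last (snd p) = b}"
      then have "fst p = src Q b" unfolding nz_path_def is_path_def by auto
      moreover have "snd p = butlast (snd p) @ [b]" using p append_butlast_last_id[of "snd p"] by auto
      ultimately show "p \<in> S" using p unfolding S_def by blast
    qed
    show "S \<subseteq> {p. nz_path Q I p \<and> snd p \<noteq> [] \<and> last (snd p) = b}"
      unfolding S_def by auto
  qed
  have PMe: "R_module Q I b = (path_module Q S :: ('v, 'a, 'v \<times> 'a list, 'k) rep)"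
    unfolding R_module_def Se ..
  have j0: "j0 = src Q a" unfolding j0_def path_end_def using tb by simp
  have inS: "(src Q b, [c, b]) \<in> S \<longleftrightarrow> (c, b) \<notin> I" if "c \<in> arrs Q" "src Q c = src Q a" for c
  proof -
    have e: "(src Q b, [c, b]) \<in> S \<longleftrightarrow> nz_path Q I (src Q b, [c, b])"
    proof
      assume "nz_path Q I (src Q b, [c, b])"
      moreover have "[c, b] = [c] @ [b]" by simp
      ultimately show "(src Q b, [c, b]) \<in> S" unfolding S_def by (metis (mono_tags, lifting) fst_conv mem_Collect_eq snd_conv)
    qed (simp add: S_def)
    have pe2: "path_end Q (src Q b, [b]) = src Q a" using tb by (simp add: path_end_def)
    show ?thesis unfolding e using nz_path_Cons[of Q I "src Q b" c "[b]"] p0 that pe2 by simp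
  qed
  have uniq: "c = a" if "c \<in> arrs Q" "src Q c = src Q a" "(c, b) \<in> I" for c
  proof -
    have "card {c\<in>arrs Q. src Q c = tgt Q b \<and> (c, b) \<in> I} \<le> 1" using gentle_card_in[OF gen b] .
    moreover have "finite {c\<in>arrs Q. src Q c = tgt Q b \<and> (c, b) \<in> I}" using gentle_finarrs[OF gen] by auto
    moreover have "a \<in> {c\<in>arrs Q. src Q c = tgt Q b \<and> (c, b) \<in> I}" using a ab tb by simp
    moreover have "c \<in> {c\<in>arrs Q. src Q c = tgt Q b \<and> (c, b) \<in> I}" using that tb by simp
    ultimately have "\<forall>x\<in>{c\<in>arrs Q. src Q c = tgt Q b \<and> (c, b) \<in> I}. \<forall>y\<in>{c\<in>arrs Q. src Q c = tgt Q b \<and> (c, b) \<in> I}. x = y"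
      and "a \<in> {c\<in>arrs Q. src Q c = tgt Q b \<and> (c, b) \<in> I}" "c \<in> {c\<in>arrs Q. src Q c = tgt Q b \<and> (c, b) \<in> I}"
      using card_le_Suc0_iff_eq[of "{c\<in>arrs Q. src Q c = tgt Q b \<and> (c, b) \<in> I}"] by simp_all
    then show ?thesis by blast
  qed
  have "K = {x\<in>space N (src Q a). rmap N a x = 0}"
  proof
    show "K \<subseteq> {x\<in>space N (src Q a). rmap N a x = 0}"
      unfolding K_def j0 using inS[of a] a ab by auto
    show "{x\<in>space N (src Q a). rmap N a x = 0} \<subseteq> K"
      unfolding K_def j0 using inS uniq by auto
  qed
  then show ?thesis using dim_main PMe by simp
qed

theorem lemma4p2:
  fixes Q :: "('v, 'a) quiver" and I :: "('a \<times> 'a) set"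
    and N :: "('v, 'a, 'u, 'k::alg_closed_field) rep"
  assumes "gentle Q I"
    and "one_gorenstein Q I TYPE('k)"
    and "gorenstein_projective Q I N"
  shows "(\<forall>i\<in>verts Q.
            vdim (space (Phi Q I N) (Inl i)) = vdim (space N i) \<and>
            vdim (space N i) = hdim (Hom Q (proj_module Q I i :: ('v, 'a, 'v \<times> 'a list, 'k) rep) N))
       \<and> (\<forall>a\<in>cyc_arrows Q I. \<forall>b\<in>arrs Q. (a, b) \<in> I \<longrightarrow>
            int (vdim (space (Phi Q I N) (Inr a))) =
              int (hdim (Hom Q (proj_module Q I (src Q a) :: ('v, 'a, 'v \<times> 'a list, 'k) rep) N))
              - int (hdim (Hom Q (R_module Q I b :: ('v, 'a, 'v \<times> 'a list, 'k) rep) N)))"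
proof -
  have gen: "gentle Q I" by fact
  have modN: "is_module Q I N" using assms(3) unfolding gorenstein_projective_def by blast
  have AV: "\<forall>a\<in>arrs Q. src Q a \<in> verts Q \<and> tgt Q a \<in> verts Q"
    using gen unfolding gentle_def by blast
  have P1: "\<forall>i\<in>verts Q.
            vdim (space (Phi Q I N) (Inl i)) = vdim (space N i) \<and>
            vdim (space N i) = hdim (Hom Q (proj_module Q I i :: ('v, 'a, 'v \<times> 'a list, 'k) rep) N)"
    using part_i[OF gen modN] by (simp add: Phi_def)
  have P2: "int (vdim (space (Phi Q I N) (Inr a))) =
              int (hdim (Hom Q (proj_module Q I (src Q a) :: ('v, 'a, 'v \<times> 'a list, 'k) rep) N))
              - int (hdim (Hom Q (R_module Q I b :: ('v, 'a, 'v \<times> 'a list, 'k) rep) N))"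
    if a: "a \<in> cyc_arrows Q I" and b: "b \<in> arrs Q" and ab: "(a, b) \<in> I" for a b
  proof -
    have aA: "a \<in> arrs Q" using a unfolding cyc_arrows_def by blast
    have sa: "src Q a \<in> verts Q" using AV aA by blast
    have V: "vsubspace (space N (src Q a))" "fin_dim (space N (src Q a))"
      using modN sa unfolding is_module_def by auto
    have L: "lin_on (space N (src Q a)) (rmap N a)" using modN aA unfolding is_module_def by blast
    have rn: "vdim (space N (src Q a)) = vdim {x\<in>space N (src Q a). rmap N a x = 0}
               + vdim (rmap N a ` space N (src Q a))"
      by (rule rank_nullity_lin_on[OF V L])
    have e1: "hdim (Hom Q (proj_module Q I (src Q a) :: ('v, 'a, 'v \<times> 'a list, 'k) rep) N) = vdim (space N (src Q a))"
      using part_i[OF gen modN sa] by simp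
    have e2: "hdim (Hom Q (R_module Q I b :: ('v, 'a, 'v \<times> 'a list, 'k) rep) N) = vdim {x\<in>space N (src Q a). rmap N a x = 0}"
      by (rule part_ii_hom[OF gen modN aA b ab])
    have e3: "space (Phi Q I N) (Inr a) = rmap N a ` space N (src Q a)" by (simp add: Phi_def)
    have rn': "int (vdim (space N (src Q a))) = int (vdim {x\<in>space N (src Q a). rmap N a x = 0})
               + int (vdim (rmap N a ` space N (src Q a)))"
      using rn by (simp only: of_nat_add[symmetric])
    show ?thesis unfolding e1 e2 e3 using rn' by linarith
  qed
  show ?thesis using P1 P2 by blast
qed


end
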